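(* Let $\mathcal C\subseteq\{0,1\}^n$ and $\mathcal D\subseteq\{0,1\}^m$ be neural codes and let $\phi:R_\mathcal D\to R_\mathcal C$ be a ring homomorphism. (i) There exists a ring homomorphism $\tau:R[m]\to R[n]$ which is compatible with $\phi$; thus $\phi$ is an $R[m]$-module homomorphism (with $R_\mathcal C$ viewed as an $R[m]$-module via $\tau$). (ii) The set of ring homomorphisms $\tau:R[m]\to R[n]$ compatible with $\phi$ is exactly the set of ring homomorphisms $\tau:R[m]\to R[n]$ such that $(\phi(f))^{-1}(1)\subseteq(\tau(f))^{-1}(1)$ for all $f\in R_\mathcal D$.
   Context: For a code $\mathcal C\subseteq\{0,1\}^n$, the neural ring $R_\mathcal C=\mathbb F_2[x_1,\dots,x_n]/I_\mathcal C$, where $I_\mathcal C$ is the ideal of polynomials vanishing on $\mathcal C$, is identified with the ring of all functions $\mathcal C\to\{0,1\}=\mathbb F_2$. $R[n]$ denotes the neural ring of the full code $\{0,1\}^n$, i.e. $\mathbb F_2[x_1,\dots,x_n]/\langle x_i^2-x_i\rangle$, the ring of all functions $\{0,1\}^n\to\{0,1\}$. $R_\mathcal C$ is an $R[n]$-module via $(r\cdot f)(c)=r(c)f(c)$. An element $f\in R_\mathcal D$ (a function on $\mathcal D\subseteq\{0,1\}^m$) is also regarded as an element of $R[m]$, namely the function on $\{0,1\}^m$ that is $1$ exactly on $f^{-1}(1)$; in particular $\tau(f)$ makes sense for $\tau:R[m]\to R[n]$. A ring homomorphism $\tau:R[m]\to R[n]$ is compatible with a group homomorphism $\phi:R_\mathcal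 D\to R_\mathcal C$ if $\phi(r\cdot f)=\tau(r)\cdot\phi(f)$ for all $r\in R[m]$, $f\in R_\mathcal D$, i.e. $\phi$ is an $R[m]$-module homomorphism when $R_\mathcal C$ is made an $R[m]$-module via $r\cdot g=\tau(r)\cdot g$. *)

theory Defs
  imports "HOL-Algebra.Ring" "HOL-Algebra.RingHom"
begin

text \<open>Codewords in {0,1}^n are boolean lists of length n (True = 1).\<close>
definition cube :: "nat \<Rightarrow> bool list set" where
  "cube n = {xs. length xs = n}"

text \<open>The neural ring R_C: functions C \<rightarrow> F2, represented as functions on all
  bool lists that vanish (are False) outside C.  Thus an element of R_D is
  literally identified with the function on {0,1}^m that is 1 exactly on f^{-1}(1).\<close>
definition neural_ring :: "bool list set \<Rightarrow> (bool list \<Rightarrow> bool) ring" where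
  "neural_ring C = \<lparr> carrier = {f. \<forall>x. x \<notin> C \<longrightarrow> \<not> f x},
                     monoid.mult = (\<lambda>f g x. f x \<and> g x),
                     one = (\<lambda>x. x \<in> C),
                     zero = (\<lambda>x. False),
                     add = (\<lambda>f g x. f x \<noteq> g x) \<rparr>"

definition full_ring :: "nat \<Rightarrow> (bool list \<Rightarrow> bool) ring" where
  "full_ring n = neural_ring (cube n)"

definition code_act :: "(bool list \<Rightarrow> bool) \<Rightarrow> (bool list \<Rightarrow> bool) \<Rightarrow> (bool list \<Rightarrow> bool)" where
  "code_act r f = (\<lambda>c. r c \<and> f c)"

definition compatible ::
  "nat \<Rightarrow> bool list set \<Rightarrow> ((bool list \<Rightarrow> bool) \<Rightarrow> (bool list \<Rightarrow> bool))
    \<Rightarrow> ((bool list \<Rightarrow> bool) \<Rightarrow> (bool list \<Rightarrow> bool)) \<Rightarrow> bool" where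
  "compatible m D \<tau> \<phi> \<longleftrightarrow>
     (\<forall>r \<in> carrier (full_ring m). \<forall>f \<in> carrier (neural_ring D).
        \<phi> (code_act r f) = code_act (\<tau> r) (\<phi> f))"

end

theory Submission
  imports Defs
begin

lemma hom_unfold:
  assumes "h \<in> ring_hom (neural_ring A) (neural_ring B)"
  shows "\<And>f. \<forall>x. x \<notin> A \<longrightarrow> \<not> f x \<Longrightarrow> \<forall>x. x \<notin> B \<longrightarrow> \<not> h f x"
    and "\<And>f g. \<forall>x. x \<notin> A \<longrightarrow> \<not> f x \<Longrightarrow> \<forall>x. x \<notin> A \<longrightarrow> \<not> g x \<Longrightarrow>
           h (\<lambda>x. f x \<and> g x) = (\<lambda>x. h f x \<and> h g x)"
    and "\<And>f g. \<forall>x. x \<notin> A \<longrightarrow> \<not> f x \<Longrightarrow> \<forall>x. x \<notin> A \<longrightarrow> \<not> g x \<Longrightarrow>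
           h (\<lambda>x. f x \<noteq> g x) = (\<lambda>x. h f x \<noteq> h g x)"
    and "h (\<lambda>x. x \<in> A) = (\<lambda>x. x \<in> B)"
proof -
  have c: "\<And>f. f \<in> carrier (neural_ring A) \<Longrightarrow> h f \<in> carrier (neural_ring B)"
    and m: "\<And>f g. f \<in> carrier (neural_ring A) \<Longrightarrow> g \<in> carrier (neural_ring A) \<Longrightarrow>
       h (f \<otimes>\<^bsub>neural_ring A\<^esub> g) = h f \<otimes>\<^bsub>neural_ring B\<^esub> h g"
    and a: "\<And>f g. f \<in> carrier (neural_ring A) \<Longrightarrow> g \<in> carrier (neural_ring A) \<Longrightarrow>
       h (f \<oplus>\<^bsub>neural_ring A\<^esub> g) = h f \<oplus>\<^bsub>neural_ring B\<^esub> h g"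
    and o: "h \<one>\<^bsub>neural_ring A\<^esub> = \<one>\<^bsub>neural_ring B\<^esub>"
    using ring_hom_memE[OF assms] by blast+
  show "\<And>f. \<forall>x. x \<notin> A \<longrightarrow> \<not> f x \<Longrightarrow> \<forall>x. x \<notin> B \<longrightarrow> \<not> h f x"
    using c unfolding neural_ring_def by simp
  show "\<And>f g. \<forall>x. x \<notin> A \<longrightarrow> \<not> f x \<Longrightarrow> \<forall>x. x \<notin> A \<longrightarrow> \<not> g x \<Longrightarrow>
           h (\<lambda>x. f x \<and> g x) = (\<lambda>x. h f x \<and> h g x)"
    using m unfolding neural_ring_def by simp
  show "\<And>f g. \<forall>x. x \<notin> A \<longrightarrow> \<not> f x \<Longrightarrow> \<forall>x. x \<notin> A \<longrightarrow> \<not> g x \<Longrightarrow>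
           h (\<lambda>x. f x \<noteq> g x) = (\<lambda>x. h f x \<noteq> h g x)"
    using a unfolding neural_ring_def by simp
  show "h (\<lambda>x. x \<in> A) = (\<lambda>x. x \<in> B)"
    using o unfolding neural_ring_def by simp
qed

lemma hom_zero:
  assumes "h \<in> ring_hom (neural_ring A) (neural_ring B)"
  shows "h (\<lambda>x. False) = (\<lambda>x. False)"
proof -
  have "h (\<lambda>x. False \<noteq> False) = (\<lambda>x. h (\<lambda>x. False) x \<noteq> h (\<lambda>x. False) x)"
    by (rule hom_unfold(3)[OF assms]) auto
  then show ?thesis by simp
qed

lemma part2:
  assumes C: "C \<subseteq> cube n" and D: "D \<subseteq> cube m"
    and phi: "\<phi> \<in> ring_hom (neural_ring D) (neural_ring C)"
    and tau: "\<tau> \<in> ring_hom (full_ring m) (full_ring n)"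
  shows "compatible m D \<tau> \<phi> \<longleftrightarrow>
     (\<forall>f \<in> carrier (neural_ring D). {c. \<phi> f c} \<subseteq> {c. \<tau> f c})"
proof
  have tau': "\<tau> \<in> ring_hom (neural_ring (cube m)) (neural_ring (cube n))"
    using tau by (simp add: full_ring_def)
  assume comp: "compatible m D \<tau> \<phi>"
  show "\<forall>f \<in> carrier (neural_ring D). {c. \<phi> f c} \<subseteq> {c. \<tau> f c}"
  proof (intro ballI subsetI)
    fix f c assume f: "f \<in> carrier (neural_ring D)" and c: "c \<in> {c. \<phi> f c}"
    have fm: "f \<in> carrier (full_ring m)" using f D
      by (auto simp: full_ring_def neural_ring_def)
    have "\<phi> (code_act f f) = code_act (\<tau> f) (\<phi> f)"
      using comp f fm unfolding compatible_def by blast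
    moreover have cf: "code_act f f = f" by (simp add: code_act_def)
    ultimately have "\<phi> f = code_act (\<tau> f) (\<phi> f)" by (simp only: cf)
    then have "\<phi> f c = code_act (\<tau> f) (\<phi> f) c" by (rule fun_cong)
    then have "\<phi> f c = (\<tau> f c \<and> \<phi> f c)" unfolding code_act_def .
    then show "c \<in> {c. \<tau> f c}" using c by auto
  qed
next
  have tau': "\<tau> \<in> ring_hom (neural_ring (cube m)) (neural_ring (cube n))"
    using tau by (simp add: full_ring_def)
  assume le: "\<forall>f \<in> carrier (neural_ring D). {c. \<phi> f c} \<subseteq> {c. \<tau> f c}"
  show "compatible m D \<tau> \<phi>"
    unfolding compatible_def
  proof (intro ballI)
    fix r f assume r: "r \<in> carrier (full_ring m)" and f: "f \<in> carrier (neural_ring D)"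
    have rC: "\<forall>x. x \<notin> cube m \<longrightarrow> \<not> r x" using r by (simp add: full_ring_def neural_ring_def)
    have fC: "\<forall>x. x \<notin> D \<longrightarrow> \<not> f x" using f by (simp add: neural_ring_def)
    define g where "g = (\<lambda>x. r x \<and> f x)"
    define h where "h = (\<lambda>x. f x \<noteq> g x)"
    have gC: "\<forall>x. x \<notin> D \<longrightarrow> \<not> g x" using fC by (simp add: g_def)
    have hC: "\<forall>x. x \<notin> D \<longrightarrow> \<not> h x" using fC by (simp add: h_def g_def)
    have gM: "\<forall>x. x \<notin> cube m \<longrightarrow> \<not> g x" using gC D by auto
    have hM: "\<forall>x. x \<notin> cube m \<longrightarrow> \<not> h x" using hC D by auto
    have le': "\<And>k c. \<forall>x. x \<notin> D \<longrightarrow> \<not> k x \<Longrightarrow> \<phi> k c \<Longrightarrow> \<tau> k c"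
      using le by (simp add: neural_ring_def subset_iff)
    have e1: "(\<lambda>x. g x \<and> r x) = g" by (auto simp: g_def)
    have t1: "\<tau> g = (\<lambda>x. \<tau> g x \<and> \<tau> r x)"
      using hom_unfold(2)[OF tau' gM rC] unfolding e1 .
    have e2: "(\<lambda>x. g x \<and> f x) = g" by (auto simp: g_def)
    have p2: "\<phi> g = (\<lambda>x. \<phi> g x \<and> \<phi> f x)"
      using hom_unfold(2)[OF phi gC fC] unfolding e2 .
    have e3: "(\<lambda>x. g x \<noteq> h x) = f" by (auto simp: h_def)
    have p3: "\<phi> f = (\<lambda>x. \<phi> g x \<noteq> \<phi> h x)"
      using hom_unfold(3)[OF phi gC hC] unfolding e3 .
    have e4: "(\<lambda>x. g x \<and> h x) = (\<lambda>x. False)" by (auto simp: h_def g_def)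
    have p4: "(\<lambda>x. \<phi> g x \<and> \<phi> h x) = (\<lambda>x. False)"
      using hom_unfold(2)[OF phi gC hC] unfolding e4 hom_zero[OF phi] by (rule sym)
    have e5: "(\<lambda>x. h x \<and> r x) = (\<lambda>x. False)" by (auto simp: h_def g_def)
    have t5: "(\<lambda>x. \<tau> h x \<and> \<tau> r x) = (\<lambda>x. False)"
      using hom_unfold(2)[OF tau' hM rC] unfolding e5 hom_zero[OF tau'] by (rule sym)
    have "\<phi> g = (\<lambda>c. \<tau> r c \<and> \<phi> f c)"
    proof
      fix c
      have a: "\<phi> g c \<Longrightarrow> \<tau> g c" using le'[OF gC] .
      have b: "\<phi> h c \<Longrightarrow> \<tau> h c" using le'[OF hC] .
      have t1c: "\<tau> g c = (\<tau> g c \<and> \<tau> r c)" using fun_cong[OF t1, of c] by simp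
      have p2c: "\<phi> g c = (\<phi> g c \<and> \<phi> f c)" using fun_cong[OF p2, of c] by simp
      have p3c: "\<phi> f c = (\<phi> g c \<noteq> \<phi> h c)" using fun_cong[OF p3, of c] by simp
      have p4c: "\<not> (\<phi> g c \<and> \<phi> h c)" using fun_cong[OF p4, of c] by simp
      have t5c: "\<not> (\<tau> h c \<and> \<tau> r c)" using fun_cong[OF t5, of c] by simp
      show "\<phi> g c = (\<tau> r c \<and> \<phi> f c)"
        using a b t1c p2c p3c p4c t5c by blast
    qed
    then show "\<phi> (code_act r f) = code_act (\<tau> r) (\<phi> f)"
      by (simp add: code_act_def g_def)
  qed
qed

theorem theorem3:
  fixes n m :: nat and C D :: "bool list set"
    and \<phi> :: "(bool list \<Rightarrow> bool) \<Rightarrow> (bool list \<Rightarrow> bool)"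
  assumes "C \<subseteq> cube n" and "D \<subseteq> cube m"
    and "\<phi> \<in> ring_hom (neural_ring D) (neural_ring C)"
  shows "(\<exists>\<tau>. \<tau> \<in> ring_hom (full_ring m) (full_ring n) \<and> compatible m D \<tau> \<phi>)
     \<and> {\<tau> \<in> ring_hom (full_ring m) (full_ring n). compatible m D \<tau> \<phi>}
       = {\<tau> \<in> ring_hom (full_ring m) (full_ring n).
            \<forall>f \<in> carrier (neural_ring D). {c. \<phi> f c} \<subseteq> {c. \<tau> f c}}"
proof
  note phi = assms(3)
  define d0 where "d0 = (replicate m False :: bool list)"
  have d0: "d0 \<in> cube m" by (simp add: d0_def cube_def)
  define \<tau> where "\<tau> = (\<lambda>r c. if c \<in> C then \<phi> (\<lambda>x. r x \<and> x \<in> D) c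
                       else if c \<in> cube n then r d0 else False)"
  have DC: "\<And>r. \<forall>x. x \<notin> D \<longrightarrow> \<not> (r x \<and> x \<in> D)" by auto
  have phiC: "\<And>k c. c \<notin> C \<Longrightarrow> \<not> \<phi> (\<lambda>x. k x \<and> x \<in> D) c"
    using hom_unfold(1)[OF phi DC] by blast
  have tauh: "\<tau> \<in> ring_hom (full_ring m) (full_ring n)"
  proof (rule ring_hom_memI)
    fix r assume "r \<in> carrier (full_ring m)"
    show "\<tau> r \<in> carrier (full_ring n)"
      using assms(1) by (auto simp: full_ring_def neural_ring_def \<tau>_def)
  next
    fix r s assume r: "r \<in> carrier (full_ring m)" and s: "s \<in> carrier (full_ring m)"
    have e: "(\<lambda>x. (r x \<and> s x) \<and> x \<in> D) = (\<lambda>x. (r x \<and> x \<in> D) \<and> (s x \<and> x \<in> D))" by auto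
    have m: "\<phi> (\<lambda>x. (r x \<and> s x) \<and> x \<in> D) = (\<lambda>c. \<phi> (\<lambda>x. r x \<and> x \<in> D) c \<and> \<phi> (\<lambda>x. s x \<and> x \<in> D) c)"
      using hom_unfold(2)[OF phi DC DC] e by simp
    have mc: "\<And>c. \<tau> (\<lambda>x. r x \<and> s x) c = (\<tau> r c \<and> \<tau> s c)"
      using fun_cong[OF m] by (simp add: \<tau>_def)
    show "\<tau> (r \<otimes>\<^bsub>full_ring m\<^esub> s) = \<tau> r \<otimes>\<^bsub>full_ring n\<^esub> \<tau> s"
      using mc by (simp add: full_ring_def neural_ring_def fun_eq_iff)
  next
    fix r s assume r: "r \<in> carrier (full_ring m)" and s: "s \<in> carrier (full_ring m)"
    have e': "(\<lambda>x. (r x \<noteq> s x) \<and> x \<in> D) = (\<lambda>x. (r x \<and> x \<in> D) \<noteq> (s x \<and> x \<in> D))" by auto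
    have a: "\<phi> (\<lambda>x. (r x \<noteq> s x) \<and> x \<in> D) = (\<lambda>c. \<phi> (\<lambda>x. r x \<and> x \<in> D) c \<noteq> \<phi> (\<lambda>x. s x \<and> x \<in> D) c)"
      using hom_unfold(3)[OF phi DC DC] e' by simp
    have ac: "\<And>c. \<tau> (\<lambda>x. r x \<noteq> s x) c = (\<tau> r c \<noteq> \<tau> s c)"
      using fun_cong[OF a] by (simp add: \<tau>_def)
    show "\<tau> (r \<oplus>\<^bsub>full_ring m\<^esub> s) = \<tau> r \<oplus>\<^bsub>full_ring n\<^esub> \<tau> s"
      using ac by (simp add: full_ring_def neural_ring_def fun_eq_iff)
  next
    have e: "(\<lambda>x. x \<in> cube m \<and> x \<in> D) = (\<lambda>x. x \<in> D)" using assms(2) by auto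
    show "\<tau> \<one>\<^bsub>full_ring m\<^esub> = \<one>\<^bsub>full_ring n\<^esub>"
      using hom_unfold(4)[OF phi] e d0 assms(1)
      by (auto simp: full_ring_def neural_ring_def \<tau>_def fun_eq_iff)
  qed
  have le: "\<forall>f \<in> carrier (neural_ring D). {c. \<phi> f c} \<subseteq> {c. \<tau> f c}"
  proof (intro ballI subsetI)
    fix f c assume f: "f \<in> carrier (neural_ring D)" and c: "c \<in> {c. \<phi> f c}"
    have fC: "\<forall>x. x \<notin> D \<longrightarrow> \<not> f x" using f by (simp add: neural_ring_def)
    have e: "(\<lambda>x. f x \<and> x \<in> D) = f" using fC by auto
    have cC: "c \<in> C" using hom_unfold(1)[OF phi fC] c by auto
    show "c \<in> {c. \<tau> f c}" using c cC by (simp add: \<tau>_def e)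
  qed
  show "\<exists>\<tau>. \<tau> \<in> ring_hom (full_ring m) (full_ring n) \<and> compatible m D \<tau> \<phi>"
    using tauh le part2[OF assms(1,2) phi tauh] by blast
next
  show "{\<tau> \<in> ring_hom (full_ring m) (full_ring n). compatible m D \<tau> \<phi>}
       = {\<tau> \<in> ring_hom (full_ring m) (full_ring n).
            \<forall>f \<in> carrier (neural_ring D). {c. \<phi> f c} \<subseteq> {c. \<tau> f c}}"
    using part2[OF assms] by blast
qed

end
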